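(* For all integers $n\ge1$ and real numbers $x\in(0,1)$, $$\arccos(x)<\int_x^1\frac{U_{2n}(t)}{\sqrt{1-t^2}}\,dt<\pi-\arccos(x).$$ If $x\in(-1,0)$, then both inequalities hold reversed, i.e. $\arccos(x)>\int_x^1\frac{U_{2n}(t)}{\sqrt{1-t^2}}\,dt>\pi-\arccos(x)$.
   Context: $U_j$ denotes the Chebyshev polynomial of the second kind of degree $j$, i.e. $U_j(\cos t)=\sin((j+1)t)/\sin t$ for $t\in[0,\pi]$. *)

theory Defs
  imports "HOL-Analysis.Analysis"
begin

fun chebU :: "nat \<Rightarrow> real \<Rightarrow> real" where
  "chebU 0 t = 1"
| "chebU (Suc 0) t = 2 * t"
| "chebU (Suc (Suc j)) t = 2 * t * chebU (Suc j) t - chebU j t"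

end

theory Submission
  imports Defs
begin


definition SS :: "nat \<Rightarrow> real \<Rightarrow> real" where
  "SS n p = (\<Sum>k=1..n. sin (real k * p) / real k)"
definition CC :: "nat \<Rightarrow> real \<Rightarrow> real" where
  "CC n p = (\<Sum>k=1..n. cos (real k * p))"

lemma CC_closed: "2 * sin (p/2) * CC n p = sin ((real n + 1/2) * p) - sin (p/2)"
proof (induction n)
  case 0 then show ?case by (simp add: CC_def)
next
  case (Suc n)
  have e: "2 * sin (p/2) * cos ((real n + 1) * p) = sin ((real n + 3/2) * p) - sin ((real n + 1/2) * p)"
  proof -
    have a: "(real n + 3/2) * p = (real n + 1) * p + p/2" by (simp add: algebra_simps)
    have b: "(real n + 1/2) * p = (real n + 1) * p - p/2" by (simp add: algebra_simps)
    show ?thesis unfolding a b sin_add sin_diff by simp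
  qed
  have "CC (Suc n) p = CC n p + cos ((real n + 1) * p)" by (simp add: CC_def add.commute)
  then have "2 * sin (p/2) * CC (Suc n) p = 2 * sin (p/2) * CC n p + 2 * sin (p/2) * cos ((real n + 1) * p)"
    by (simp add: algebra_simps)
  also have "\<dots> = sin ((real (Suc n) + 1/2) * p) - sin (p/2)" using Suc e by (simp add: algebra_simps)
  finally show ?case .
qed

lemma SS_deriv: "(SS n has_real_derivative CC n p) (at p)"
  unfolding SS_def CC_def
  by (auto intro!: derivative_eq_intros DERIV_sum)

lemma chebU_cos_aux: "chebU j (cos th) * sin th = sin ((real j + 1) * th) \<and> chebU (Suc j) (cos th) * sin th = sin ((real j + 2) * th)"
proof (induction j)
  case 0 then show ?case by (simp add: sin_double)
next
  case (Suc j)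
  have a: "(real j + 3) * th = (real j + 2) * th + th" by (simp add: algebra_simps)
  have b: "(real j + 1) * th = (real j + 2) * th - th" by (simp add: algebra_simps)
  have "chebU (Suc (Suc j)) (cos th) * sin th = 2 * cos th * (chebU (Suc j) (cos th) * sin th) - chebU j (cos th) * sin th"
    by (simp add: algebra_simps)
  also have "\<dots> = 2 * cos th * sin ((real j + 2) * th) - sin ((real j + 1) * th)"
    using Suc by simp
  also have "\<dots> = sin ((real j + 3) * th)"
    unfolding a b sin_add sin_diff by (simp add: algebra_simps)
  finally show ?case using Suc by (simp add: add.commute add.left_commute)
qed

lemma chebU_cos: "chebU j (cos th) * sin th = sin ((real j + 1) * th)"
  using chebU_cos_aux by blast



lemma chebU_eq: assumes "-1 < t" "t < 1"
  shows "chebU (2*n) t = 1 + 2 * CC n (2 * arccos t)"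
proof -
  define th where "th = arccos t"
  have ct: "cos th = t" using assms by (simp add: th_def)
  have st: "sin th > 0" unfolding th_def using assms sin_arccos_nonzero arccos_lt_bounded
    by (simp add: sin_gt_zero)
  have "chebU (2*n) t * sin th = sin ((real (2*n) + 1) * th)" using chebU_cos[of "2*n" th] ct by simp
  also have "\<dots> = sin th * (1 + 2 * CC n (2*th))"
    using CC_closed[of "2*th" n] by (simp add: algebra_simps)
  finally show ?thesis using st unfolding th_def by (simp add: mult.commute)
qed

lemma CC_bound: "\<bar>CC n p\<bar> \<le> real n"
proof -
  have "\<bar>CC n p\<bar> \<le> (\<Sum>k=1..n. \<bar>cos (real k * p)\<bar>)" unfolding CC_def by (rule sum_abs)
  also have "\<dots> \<le> (\<Sum>k=1..n. 1)" by (rule sum_mono) simp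
  finally show ?thesis by simp
qed

definition HH :: "nat \<Rightarrow> real \<Rightarrow> real" where
  "HH n t = arccos t + SS n (2 * arccos t)"

lemma HH_deriv: assumes "-1 < t" "t < 1"
  shows "(HH n has_real_derivative (- (chebU (2*n) t / sqrt (1 - t\<^sup>2)))) (at t)"
proof -
  have d: "(HH n has_real_derivative (inverse (- sqrt (1 - t\<^sup>2)) + CC n (2 * arccos t) * (2 * inverse (- sqrt (1 - t\<^sup>2))))) (at t)"
    unfolding HH_def
    by (intro derivative_intros DERIV_arccos assms DERIV_chain2[OF SS_deriv] DERIV_cmult[where c=2, OF DERIV_arccos])
  have e: "inverse (- sqrt (1 - t\<^sup>2)) + CC n (2 * arccos t) * (2 * inverse (- sqrt (1 - t\<^sup>2))) = - (chebU (2*n) t / sqrt (1 - t\<^sup>2))"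
    using chebU_eq[OF assms, of n] by (simp add: divide_simps)
  show ?thesis using d unfolding e .
qed

lemma pos_crit:
  fixes g g' :: "real \<Rightarrow> real"
  assumes cont: "continuous_on {0..pi} g"
    and der: "\<And>p. 0 < p \<Longrightarrow> p < pi \<Longrightarrow> (g has_real_derivative g' p) (at p)"
    and g0: "g 0 \<ge> 0" and gpi: "g pi \<ge> 0"
    and crit: "\<And>p. 0 < p \<Longrightarrow> p < pi \<Longrightarrow> g' p = 0 \<Longrightarrow> g p > 0"
    and p: "0 < p" "p < pi"
  shows "g p > 0"
proof (rule ccontr)
  assume neg: "\<not> g p > 0"
  obtain m where m: "m \<in> {0..pi}" "\<And>y. y \<in> {0..pi} \<Longrightarrow> g m \<le> g y"
    using continuous_attains_inf[OF compact_Icc _ cont] pi_gt_zero by fastforce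
  define q where "q = (if 0 < m \<and> m < pi then m else p)"
  have q: "0 < q" "q < pi" using p by (auto simp: q_def)
  have qmin: "g q \<le> g y" if "y \<in> {0..pi}" for y
  proof (cases "0 < m \<and> m < pi")
    case True then show ?thesis using m that by (simp add: q_def)
  next
    case False
    then have "m = 0 \<or> m = pi" using m by auto
    then have "g m \<ge> 0" using g0 gpi by auto
    moreover have "g m \<le> g p" using m p by auto
    ultimately show ?thesis using False neg m(2)[OF that] by (simp add: q_def)
  qed
  have "g' q = 0"
  proof (rule DERIV_local_min[OF der[OF q]])
    show "0 < min q (pi - q)" using q by simp
    show "\<forall>y. \<bar>q - y\<bar> < min q (pi - q) \<longrightarrow> g q \<le> g y"
      using qmin by (auto simp: abs_if split: if_splits)
  qed
  then have "g q > 0" using crit q by blast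
  moreover have "g q \<le> g p" using qmin p by auto
  ultimately show False using neg by simp
qed



lemma SS_cont: "continuous_on A (SS n)"
  using SS_deriv DERIV_isCont continuous_at_imp_continuous_on by blast

lemma SS_0 [simp]: "SS n 0 = 0" by (simp add: SS_def)
lemma SS_pi [simp]: "SS n pi = 0" by (simp add: SS_def)

lemma SS_Suc: "SS (Suc n) p = SS n p + sin (real (Suc n) * p) / real (Suc n)"
  by (simp add: SS_def)

lemma key_expand:
  fixes N :: nat
  shows "sin (real N * p) = sin ((real N + 1/2) * p) * cos (p/2) - cos ((real N + 1/2) * p) * sin (p/2)"
proof -
  have "real N * p = (real N + 1/2) * p - p/2" by (simp add: algebra_simps)
  then show ?thesis by (simp add: sin_diff)
qed

lemma half_facts: assumes "0 < p" "p < pi" shows "sin (p/2) > 0" "cos (p/2) > 0"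
  using assms by (auto intro!: sin_gt_zero cos_gt_zero)

lemma abs_cos_eq: fixes a b s :: real assumes "sin a = s" "sin b = s \<or> sin b = - s" "cos b > 0"
  shows "\<bar>cos a\<bar> = cos b"
proof -
  have "(sin a)\<^sup>2 = (sin b)\<^sup>2" using assms(1,2) by auto
  then have "(cos a)\<^sup>2 = (cos b)\<^sup>2" using sin_cos_squared_add[of a] sin_cos_squared_add[of b] by linarith
  then show ?thesis using assms(3) by (metis abs_of_pos power2_abs real_sqrt_abs)
qed

lemma fejer_lower: "0 < p \<Longrightarrow> p < pi \<Longrightarrow> SS (Suc m) p > 0"
proof (induction m arbitrary: p)
  case 0 then show ?case by (simp add: SS_def sin_gt_zero)
next
  case (Suc m)
  show ?case
  proof (rule pos_crit[where g = "SS (Suc (Suc m))" and g' = "CC (Suc (Suc m))"])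
    show "continuous_on {0..pi} (SS (Suc (Suc m)))" by (rule SS_cont)
    show "(SS (Suc (Suc m)) has_real_derivative CC (Suc (Suc m)) q) (at q)" for q by (rule SS_deriv)
    show "SS (Suc (Suc m)) 0 \<ge> 0" "SS (Suc (Suc m)) pi \<ge> 0" by simp_all
    show "0 < p" "p < pi" by fact+
  next
    fix q assume q: "0 < q" "q < pi" and c: "CC (Suc (Suc m)) q = 0"
    let ?N = "Suc (Suc m)"
    have s: "sin ((real ?N + 1/2) * q) = sin (q/2)" using CC_closed[of q ?N] c by simp
    have hf: "sin (q/2) > 0" "cos (q/2) > 0" using half_facts[OF q] by auto
    have "\<bar>cos ((real ?N + 1/2) * q)\<bar> = cos (q/2)" using abs_cos_eq[OF s] hf by simp
    then have "cos ((real ?N + 1/2) * q) \<le> cos (q/2)" by linarith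
    then have "sin (real ?N * q) \<ge> 0" unfolding key_expand s
      using hf by (simp add: algebra_simps mult_left_mono)
    moreover have "SS (Suc m) q > 0" using Suc.IH q by blast
    ultimately show "SS ?N q > 0" unfolding SS_Suc[of "Suc m"] by (simp add: add_pos_nonneg)
  qed
qed

lemma fejer_upper: "0 < p \<Longrightarrow> p < pi \<Longrightarrow> SS m p < pi - p"
proof (induction m arbitrary: p)
  case 0 then show ?case by (simp add: SS_def)
next
  case (Suc m)
  have "pi - p - SS (Suc m) p > 0"
  proof (rule pos_crit[where g = "\<lambda>q. pi - q - SS (Suc m) q" and g' = "\<lambda>q. -1 - CC (Suc m) q"])
    show "continuous_on {0..pi} (\<lambda>q. pi - q - SS (Suc m) q)" by (intro continuous_intros SS_cont)
    show "((\<lambda>q. pi - q - SS (Suc m) q) has_real_derivative -1 - CC (Suc m) q) (at q)" for q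
      by (auto intro!: derivative_eq_intros SS_deriv)
    show "pi - 0 - SS (Suc m) 0 \<ge> 0" "pi - pi - SS (Suc m) pi \<ge> 0" by simp_all
    show "0 < p" "p < pi" by fact+
  next
    fix q assume q: "0 < q" "q < pi" and c: "-1 - CC (Suc m) q = 0"
    let ?N = "Suc m"
    have s: "sin ((real ?N + 1/2) * q) = - sin (q/2)" using CC_closed[of q ?N] c[symmetric]
      by (simp add: algebra_simps)
    have hf: "sin (q/2) > 0" "cos (q/2) > 0" using half_facts[OF q] by auto
    have "\<bar>cos ((real ?N + 1/2) * q)\<bar> = cos (q/2)" using abs_cos_eq[OF s] hf by simp
    then have "cos ((real ?N + 1/2) * q) \<ge> - cos (q/2)" by linarith
    then have "sin (q/2) * (- cos (q/2)) \<le> sin (q/2) * cos ((real ?N + 1/2) * q)"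
      using hf by (intro mult_left_mono) auto
    then have "sin (real ?N * q) \<le> 0" unfolding key_expand s
      by (simp add: algebra_simps)
    moreover have "SS m q < pi - q" using Suc.IH q by blast
    ultimately show "pi - q - SS ?N q > 0" unfolding SS_Suc[of m]
      by (smt (verit) divide_nonpos_pos of_nat_0_less_iff zero_less_Suc)
  qed
  then show ?case by simp
qed



lemma chebU_isCont: "isCont (chebU j) t \<and> isCont (chebU (Suc j)) t"
proof (induction j)
  case 0 then show ?case by simp
next
  case (Suc j) then show ?case by (simp add: continuous_intros)
qed

lemma HH_cont: "continuous_on {-1..1} (HH n)"
  unfolding HH_def
  by (intro continuous_intros continuous_on_compose2[OF SS_cont, of _ "\<lambda>t. 2 * arccos t"]) auto

lemma lim_right: assumes "continuous_on {-1..1} F" "-1 < x" "x < 1"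
  shows "((F \<circ> real_of_ereal) \<longlongrightarrow> F x) (at_right (ereal x))"
proof -
  have "continuous_on {x..1} F" using assms(1) by (rule continuous_on_subset) (use assms in auto)
  then have "(F \<longlongrightarrow> F x) (at x within {x..1})" using assms
    by (simp add: continuous_on_def)
  then show ?thesis using assms by (simp add: ereal_tendsto_simps1 at_within_Icc_at_right)
qed

lemma lim_left: assumes "continuous_on {-1..1} F"
  shows "((F \<circ> real_of_ereal) \<longlongrightarrow> F 1) (at_left (ereal 1))"
proof -
  have "(F \<longlongrightarrow> F 1) (at 1 within {-1..1})" using assms
    by (simp add: continuous_on_def)
  then show ?thesis by (simp add: ereal_tendsto_simps1 at_within_Icc_at_left)
qed

lemma integral_eq: assumes x: "-1 < x" "x < 1"
  shows "(LBINT t=x..1. chebU (2*n) t / sqrt (1 - t\<^sup>2)) = HH n x"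
proof -
  define f where "f t = chebU (2*n) t / sqrt (1 - t\<^sup>2)" for t
  define g2 where "g2 t = (2 * real n + 1) / sqrt (1 - t\<^sup>2)" for t
  define g1 where "g1 t = g2 t + f t" for t
  define F2 where "F2 t = - (2 * real n + 1) * arccos t" for t
  define F1 where "F1 t = F2 t - HH n t" for t
  have sq: "sqrt (1 - t\<^sup>2) > 0" if "-1 < t" "t < 1" for t
    using that by (simp add: abs_square_less_1)
  have xl: "ereal x < ereal 1" using x by simp
  have in1: "-1 < t" "t < 1" if "ereal x < ereal t" "ereal t < ereal 1" for t
    using that x by auto
  have F2c: "continuous_on {-1..1} F2" unfolding F2_def by (intro continuous_intros) auto
  have F1c: "continuous_on {-1..1} F1" unfolding F1_def using F2c HH_cont by (intro continuous_intros)
  have F2d: "DERIV F2 t :> g2 t" if "-1 < t" "t < 1" for t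
  proof -
    have "DERIV F2 t :> - (2 * real n + 1) * inverse (- sqrt (1 - t\<^sup>2))"
      unfolding F2_def by (intro DERIV_cmult DERIV_arccos that)
    moreover have "- (2 * real n + 1) * inverse (- sqrt (1 - t\<^sup>2)) = g2 t"
      unfolding g2_def inverse_eq_divide
      by (metis minus_diff_eq minus_divide_left diff_minus_eq_add add.commute divide_minus_right mult_1_right times_divide_eq_right)
    ultimately show ?thesis by simp
  qed
  have F1d: "DERIV F1 t :> g1 t" if "-1 < t" "t < 1" for t
  proof -
    have "DERIV F1 t :> g2 t - (- f t)"
      unfolding F1_def f_def using F2d[OF that] HH_deriv[OF that] by (intro DERIV_diff)
    then show ?thesis by (simp add: g1_def)
  qed
  have fc: "isCont f t" if "-1 < t" "t < 1" for t
    unfolding f_def using sq[OF that] chebU_isCont by (intro continuous_intros) auto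
  have g2c: "isCont g2 t" if "-1 < t" "t < 1" for t
    unfolding g2_def using sq[OF that] by (intro continuous_intros) auto
  have g1c: "isCont g1 t" if "-1 < t" "t < 1" for t
    unfolding g1_def using fc[OF that] g2c[OF that] by (intro continuous_intros)
  have g2nn: "0 \<le> g2 t" if "-1 < t" "t < 1" for t
    using sq[OF that] by (simp add: g2_def)
  have g1nn: "0 \<le> g1 t" if "-1 < t" "t < 1" for t
  proof -
    have "chebU (2*n) t \<ge> - (2 * real n + 1)"
      using chebU_eq[OF that, of n] CC_bound[of n "2 * arccos t"] by linarith
    then show ?thesis using sq[OF that] by (simp add: g1_def g2_def f_def add_divide_distrib[symmetric])
  qed
  have int2: "set_integrable lborel (einterval (ereal x) (ereal 1)) g2"
    by (rule interval_integral_FTC_nonneg(1)[OF xl, where F = F2 and A = "F2 x" and B = "F2 1"])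
       (use x in \<open>auto intro!: F2d g2c g2nn lim_right lim_left F2c AE_I2\<close>)
  have int1: "set_integrable lborel (einterval (ereal x) (ereal 1)) g1"
    by (rule interval_integral_FTC_nonneg(1)[OF xl, where F = F1 and A = "F1 x" and B = "F1 1"])
       (use x in \<open>auto intro!: F1d g1c g1nn lim_right lim_left F1c AE_I2\<close>)
  have intf: "set_integrable lborel (einterval (ereal x) (ereal 1)) f"
    using set_integral_diff(1)[OF int1 int2] by (simp add: g1_def)
  have mc: "continuous_on {-1..1} (\<lambda>t. - HH n t)" using HH_cont by (intro continuous_intros)
  have md: "((\<lambda>t. - HH n t) has_vector_derivative f t) (at t)" if "ereal x < ereal t" "ereal t < ereal 1" for t
  proof -
    have "((\<lambda>t. - HH n t) has_real_derivative - (- (chebU (2*n) t / sqrt (1 - t\<^sup>2)))) (at t)"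
      using in1[OF that] by (intro DERIV_minus HH_deriv)
    then show ?thesis by (simp add: has_real_derivative_iff_has_vector_derivative[symmetric] f_def)
  qed
  have fc': "isCont f t" if "ereal x < ereal t" "ereal t < ereal 1" for t
    using in1[OF that] by (rule fc)
  have "(LBINT t=ereal x..ereal 1. f t) = (- HH n 1) - (- HH n x)"
    by (rule interval_integral_FTC_integrable[OF xl md fc' intf lim_right[OF mc x] lim_left[OF mc]])
  then show ?thesis by (simp add: f_def HH_def SS_def one_ereal_def add.commute)
qed



lemma sin_refl: "sin (real k * (2 * pi - p)) = - sin (real k * p)"
proof -
  have "real k * (2 * pi - p) = real (2 * k) * pi - real k * p" by (simp add: algebra_simps)
  then show ?thesis by (simp add: sin_diff cos_npi)
qed

lemma SS_refl: "SS n (2 * pi - p) = - SS n p"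
  unfolding SS_def sin_refl by (simp add: sum_negf)

theorem theorem4p3:
  fixes n :: nat and x :: real
  assumes "n \<ge> 1"
  shows "(0 < x \<and> x < 1 \<longrightarrow>
           arccos x < (LBINT t=x..1. chebU (2*n) t / sqrt (1 - t\<^sup>2)) \<and>
           (LBINT t=x..1. chebU (2*n) t / sqrt (1 - t\<^sup>2)) < pi - arccos x)
       \<and> (-1 < x \<and> x < 0 \<longrightarrow>
           arccos x > (LBINT t=x..1. chebU (2*n) t / sqrt (1 - t\<^sup>2)) \<and>
           (LBINT t=x..1. chebU (2*n) t / sqrt (1 - t\<^sup>2)) > pi - arccos x)"
proof (intro conjI impI; elim conjE)
  obtain m where nm: "n = Suc m" using assms by (cases n) auto
  {
    assume x: "0 < x" "x < 1"
    have I: "(LBINT t=x..1. chebU (2*n) t / sqrt (1 - t\<^sup>2)) = arccos x + SS n (2 * arccos x)"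
      using integral_eq[where x=x and n=n] x by (simp add: HH_def)
    have a: "0 < arccos x" "arccos x < pi/2"
      using arccos_less_arccos[of 0 x] arccos_less_arccos[of x 1] x by auto
    have l: "SS n (2 * arccos x) > 0" unfolding nm by (rule fejer_lower) (use a in auto)
    have u: "SS n (2 * arccos x) < pi - 2 * arccos x" by (rule fejer_upper) (use a in auto)
    show "arccos x < (LBINT t=x..1. chebU (2*n) t / sqrt (1 - t\<^sup>2))" using I l by simp
    show "(LBINT t=x..1. chebU (2*n) t / sqrt (1 - t\<^sup>2)) < pi - arccos x" using I u by simp
  }
  {
    assume x: "-1 < x" "x < 0"
    have I: "(LBINT t=x..1. chebU (2*n) t / sqrt (1 - t\<^sup>2)) = arccos x + SS n (2 * arccos x)"
      using integral_eq[where x=x and n=n] x by (simp add: HH_def)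
    have a: "pi/2 < arccos x" "arccos x < pi"
      using arccos_less_arccos[of x 0] arccos_less_arccos[of "-1" x] x by auto
    define q where "q = 2 * pi - 2 * arccos x"
    have q: "0 < q" "q < pi" using a by (auto simp: q_def)
    have e: "SS n (2 * arccos x) = - SS n q" unfolding q_def using SS_refl[of n "2 * arccos x"] by simp
    have l: "SS n q > 0" unfolding nm by (rule fejer_lower) (use q in auto)
    have u: "SS n q < pi - q" by (rule fejer_upper) (use q in auto)
    show "arccos x > (LBINT t=x..1. chebU (2*n) t / sqrt (1 - t\<^sup>2))" using I l e by simp
    show "(LBINT t=x..1. chebU (2*n) t / sqrt (1 - t\<^sup>2)) > pi - arccos x" using I u e q_def by simp
  }
qed


end
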